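(* Let $m\ge 2$ be an integer. For every positive integer $n$, consider the partitions $\lambda$ of $n$ satisfying both of the following conditions: (i) the smallest part $s$ of $\lambda$ appears fewer than $m$ times; (ii) every part of $\lambda$ that is divisible by $m$ is at most $ms$. The number of such partitions equals the number of partitions of $n$ in which every part appears fewer than $m$ times. *)

theory Defs
  imports Main "HOL-Library.Multiset"
begin

definition partitions :: "nat \<Rightarrow> nat multiset set" where
  "partitions n = {P. (\<forall>x\<in>#P. 0 < x) \<and> sum_mset P = n}"

definition smallest_part :: "nat multiset \<Rightarrow> nat" where
  "smallest_part P = Min (set_mset P)"

end

theory Submission
  imports Defs
begin

definition pos_part :: "nat multiset \<Rightarrow> nat multiset" where
  "pos_part E = image_mset (\<lambda>j. j - 1) (filter_mset (\<lambda>j. 0 < j) E)"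

lemma pos_part_sum:
  fixes m :: nat
  shows "(\<Sum>j\<in>#E. m^j) = count E 0 + m * (\<Sum>j\<in>#pos_part E. m^j)"
  unfolding pos_part_def
proof (induction E)
  case empty then show ?case by simp
next
  case (add x E)
  then show ?case by (cases x) (auto simp: algebra_simps)
qed

lemma pos_part_count: "count (pos_part E) k = count E (Suc k)"
  unfolding pos_part_def
proof (induction E)
  case empty then show ?case by simp
next
  case (add x E)
  then show ?case by (cases x) auto
qed

lemma digit_count:
  fixes m :: nat
  assumes "\<forall>k. count E k < m"
  shows "count E k = (\<Sum>j\<in>#E. m^j) div m^k mod m"
  using assms
proof (induction k arbitrary: E)
  case 0
  then show ?case using pos_part_sum[of m E] by simp
next
  case (Suc k)
  have c: "\<forall>k. count (pos_part E) k < m" using Suc.prems by (simp add: pos_part_count)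
  have "(\<Sum>j\<in>#E. m^j) div m = (\<Sum>j\<in>#pos_part E. m^j)"
    using pos_part_sum[of m E] Suc.prems by (metis add.commute div_mult_self2 div_less less_nat_zero_code plus_nat.add_0 mult_eq_0_iff)
  then show ?case using Suc.IH[OF c] by (simp add: pos_part_count div_mult2_eq)
qed

lemma digits_exist:
  fixes m c :: nat
  assumes "m \<ge> 2"
  shows "\<exists>E. (\<forall>k. count E k < m) \<and> (\<Sum>j\<in>#E. m^j) = c"
proof (induction c rule: less_induct)
  case (less c)
  show ?case
  proof (cases "c = 0")
    case True then show ?thesis by (intro exI[of _ "{#}"]) (use assms in auto)
  next
    case False
    then have "c div m < c" using assms by simp
    then obtain E1 where E1: "\<forall>k. count E1 k < m" "(\<Sum>j\<in>#E1. m^j) = c div m" using less by blast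
    define E where "E = replicate_mset (c mod m) 0 + image_mset Suc E1"
    have cnt: "count E k < m" for k
    proof (cases k)
      case 0
      have "count (image_mset Suc E1) 0 = 0" by (induction E1) auto
      then show ?thesis using assms 0 by (simp add: E_def)
    next
      case (Suc k')
      have "count (image_mset Suc E1) (Suc k') = count E1 k'"
        by (induction E1) auto
      then show ?thesis using E1 Suc by (simp add: E_def)
    qed
    have "(\<Sum>j\<in>#image_mset Suc E1. m^j) = m * (\<Sum>j\<in>#E1. m^j)"
      by (simp add: multiset.map_comp o_def sum_mset_distrib_left)
    then have "(\<Sum>j\<in>#E. m^j) = c mod m + m * (c div m)" using E1 by (simp add: E_def)
    then show ?thesis using cnt by auto
  qed
qed


function ex :: "nat \<Rightarrow> nat \<Rightarrow> nat \<Rightarrow> nat" where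
  "ex m s y = (if 1 < m \<and> m dvd y \<and> m*s < y then Suc (ex m s (y div m)) else 0)"
  by auto
termination by (relation "measure (\<lambda>(m,s,y). y)") auto

declare ex.simps[simp del]

definition bs :: "nat \<Rightarrow> nat \<Rightarrow> nat \<Rightarrow> nat" where
  "bs m s y = y div m ^ (ex m s y)"

lemma F1:
  assumes "1 < m" "s < y"
  shows "s < bs m s y \<and> y = m^(ex m s y) * bs m s y \<and> (m dvd bs m s y \<longrightarrow> bs m s y \<le> m*s)"
  using assms
proof (induction m s y rule: ex.induct)
  case (1 m s y)
  show ?case
  proof (cases "m dvd y \<and> m*s < y")
    case True
    then obtain y' where y': "y = m*y'" by blast
    have sy: "s < y'" using True y' by simp
    have e: "ex m s y = Suc (ex m s y')" using True 1(2) y' by (subst ex.simps) simp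
    have yd: "y div m = y'" using y' 1(2) by simp
    have b: "bs m s y = bs m s y'" unfolding bs_def e using yd
      by (metis div_mult2_eq power_Suc)
    have IH: "s < bs m s y' \<and> y' = m^(ex m s y') * bs m s y' \<and> (m dvd bs m s y' \<longrightarrow> bs m s y' \<le> m*s)"
      using 1(1)[of] 1(2) True sy yd by auto
    show ?thesis using IH b e y' by (metis mult.assoc power_Suc)
  next
    case False
    have e: "ex m s y = 0" using False by (subst ex.simps) simp
    then show ?thesis using False 1(3) by (auto simp: bs_def)
  qed
qed

lemma F2:
  assumes "1 < m" "s < b" "m dvd b \<longrightarrow> b \<le> m*s"
  shows "ex m s (m^k*b) = k"
proof (induction k)
  case 0
  then show ?case using assms by (subst ex.simps) auto
next
  case (Suc k)
  have "m*s < m*b" using assms by simp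
  also have "m*b \<le> m^Suc k * b" using assms by simp
  finally have lt: "m*s < m^Suc k * b" .
  have "m^Suc k * b div m = m^k*b" using assms by simp
  then show ?case using Suc lt assms(1) by (subst ex.simps) simp
qed

lemma F2b:
  assumes "1 < m" "s < b" "m dvd b \<longrightarrow> b \<le> m*s"
  shows "bs m s (m^k*b) = b"
  using F2[OF assms] assms(1) by (simp add: bs_def)

definition fpart :: "nat \<Rightarrow> nat \<Rightarrow> nat \<Rightarrow> nat multiset" where
  "fpart m s y = (if y \<le> s then {#y#} else replicate_mset (m^ex m s y) (bs m s y))"

definition phi0 :: "nat \<Rightarrow> nat \<Rightarrow> nat multiset \<Rightarrow> nat multiset" where
  "phi0 m s Q = sum_mset (image_mset (fpart m s) Q)"

definition Ebs :: "nat \<Rightarrow> nat \<Rightarrow> nat \<Rightarrow> nat multiset \<Rightarrow> nat multiset" where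
  "Ebs m s b Q = image_mset (ex m s) (filter_mset (\<lambda>y. s < y \<and> bs m s y = b) Q)"

lemma c1:
  assumes "1 < m" "\<forall>y\<in>#Q. s \<le> y" "b < s"
  shows "count (phi0 m s Q) b = 0"
  using assms(2)
proof (induction Q)
  case empty then show ?case by (simp add: phi0_def)
next
  case (add y Q)
  have "count (fpart m s y) b = 0"
    using F1[OF assms(1), of s y] add.prems assms(3) by (auto simp: fpart_def)
  then show ?case using add by (simp add: phi0_def)
qed

lemma c2:
  assumes "1 < m" "\<forall>y\<in>#Q. s \<le> y"
  shows "count (phi0 m s Q) s = count Q s"
  using assms(2)
proof (induction Q)
  case empty then show ?case by (simp add: phi0_def)
next
  case (add y Q)
  have "count (fpart m s y) s = (if y = s then 1 else 0)"
    using F1[OF assms(1), of s y] add.prems by (auto simp: fpart_def)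
  then show ?case using add by (simp add: phi0_def)
qed

lemma c3:
  assumes "1 < m" "\<forall>y\<in>#Q. s \<le> y" "s < b"
  shows "count (phi0 m s Q) b = (\<Sum>k\<in>#Ebs m s b Q. m^k)"
  using assms(2)
proof (induction Q)
  case empty then show ?case by (simp add: phi0_def Ebs_def)
next
  case (add y Q)
  have "count (fpart m s y) b = (if s < y \<and> bs m s y = b then m^ex m s y else 0)"
    using add.prems assms(3) by (auto simp: fpart_def)
  then show ?case using add by (simp add: phi0_def Ebs_def)
qed

lemma c4:
  assumes "1 < m" "m dvd b" "m*s < b"
  shows "Ebs m s b Q = {#}"
proof -
  have "\<not> (s < y \<and> bs m s y = b)" for y
  proof
    assume h: "s < y \<and> bs m s y = b"
    then have "b \<le> m*s" using F1[OF assms(1), of s y] assms(2) by auto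
    then show False using assms(3) by simp
  qed
  then have "filter_mset (\<lambda>y. s < y \<and> bs m s y = b) Q = {#}" by simp
  then show ?thesis by (simp add: Ebs_def)
qed

lemma c5:
  assumes "1 < m"
  shows "sum_mset (phi0 m s Q) = sum_mset Q"
proof (induction Q)
  case empty then show ?case by (simp add: phi0_def)
next
  case (add y Q)
  have "sum_mset (fpart m s y) = y"
    using F1[OF assms(1), of s y] by (auto simp: fpart_def)
  then show ?case using add by (simp add: phi0_def)
qed


lemma Ecount:
  assumes "1 < m" "s < b" "m dvd b \<longrightarrow> b \<le> m*s"
  shows "count (Ebs m s b Q) k = count Q (m^k*b)"
proof -
  let ?F = "filter_mset (\<lambda>y. s < y \<and> bs m s y = b) Q"
  have gt: "s < m^k*b"
  proof -
    have "1 \<le> m^k" using assms(1) by simp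
    then have "1*b \<le> m^k*b" by (rule mult_le_mono1)
    then show ?thesis using assms(2) by linarith
  qed
  have eq: "ex m s -` {k} \<inter> set_mset ?F = (if m^k*b \<in># Q then {m^k*b} else {})"
  proof (intro set_eqI iffI)
    fix y assume "y \<in> ex m s -` {k} \<inter> set_mset ?F"
    then have y: "y \<in># Q" "s < y" "bs m s y = b" "ex m s y = k" by auto
    then have "y = m^k*b" using F1[OF assms(1), of s y] by auto
    then show "y \<in> (if m^k*b \<in># Q then {m^k*b} else {})" using y by auto
  next
    fix y assume "y \<in> (if m^k*b \<in># Q then {m^k*b} else {})"
    then show "y \<in> ex m s -` {k} \<inter> set_mset ?F"
      using F2[OF assms] F2b[OF assms] gt by (auto split: if_splits)
  qed
  have "count (Ebs m s b Q) k = (\<Sum>y\<in>ex m s -` {k} \<inter> set_mset ?F. count ?F y)"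
    unfolding Ebs_def by (rule count_image_mset)
  also have "\<dots> = count Q (m^k*b)"
    unfolding eq using F2b[OF assms] gt by (auto simp: not_in_iff)
  finally show ?thesis .
qed

definition psif :: "nat \<Rightarrow> nat \<Rightarrow> nat multiset \<Rightarrow> nat \<Rightarrow> nat" where
  "psif m s P y = (if y \<le> s then count P y else count P (bs m s y) div m^(ex m s y) mod m)"

definition Psi :: "nat \<Rightarrow> nat multiset \<Rightarrow> nat multiset" where
  "Psi m P = Abs_multiset (psif m (smallest_part P) P)"

definition Phi :: "nat \<Rightarrow> nat multiset \<Rightarrow> nat multiset" where
  "Phi m Q = phi0 m (smallest_part Q) Q"

lemma psif_fin:
  assumes "1 < m"
  shows "finite {y. 0 < psif m s P y}"
proof (rule finite_subset)
  show "finite (set_mset P \<union> (\<lambda>(b,k). m^k*b) ` (set_mset P \<times> {..<size P}))" by auto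
  show "{y. 0 < psif m s P y} \<subseteq> set_mset P \<union> (\<lambda>(b,k). m^k*b) ` (set_mset P \<times> {..<size P})"
  proof
    fix y assume "y \<in> {y. 0 < psif m s P y}"
    then have h: "0 < psif m s P y" by simp
    show "y \<in> set_mset P \<union> (\<lambda>(b,k). m^k*b) ` (set_mset P \<times> {..<size P})"
    proof (cases "y \<le> s")
      case True then show ?thesis using h by (simp add: psif_def)
    next
      case False
      let ?c = "count P (bs m s y)" and ?e = "ex m s y"
      have d: "0 < ?c div m^?e" using h False by (simp add: psif_def) (metis mod_less_eq_dividend not_gr0 le_0_eq)
      then have "m^?e \<le> ?c" by (metis div_less not_less less_irrefl)
      moreover have "?e < 2^?e" by simp
      moreover have "2^?e \<le> m^?e" using assms by (simp add: power_mono)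
      moreover have "?c \<le> size P" by (rule count_le_size)
      ultimately have e: "?e < size P" by linarith
      have b: "bs m s y \<in># P" using d by (metis div_0 count_greater_zero_iff less_irrefl not_gr0)
      have "y = m^?e * bs m s y" using F1[OF assms, of s y] False by auto
      then show ?thesis using e b by (auto intro!: image_eqI[of _ _ "(bs m s y, ?e)"])
    qed
  qed
qed

lemma count_Psi:
  assumes "1 < m"
  shows "count (Psi m P) y = psif m (smallest_part P) P y"
  unfolding Psi_def using psif_fin[OF assms] by simp

lemma smallest_eq:
  assumes "s \<in># Q" "\<forall>y\<in>#Q. s \<le> y"
  shows "smallest_part Q = s"
  unfolding smallest_part_def using assms by (intro Min_eqI) auto

lemma smallest_props:
  assumes "Q \<noteq> {#}"
  shows "smallest_part Q \<in># Q" "\<forall>y\<in>#Q. smallest_part Q \<le> y"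
  unfolding smallest_part_def using assms by auto


definition Lset where
  "Lset m n = {P \<in> partitions n.
                 count P (smallest_part P) < m \<and>
                 (\<forall>x\<in>#P. m dvd x \<longrightarrow> x \<le> m * smallest_part P)}"
definition Rset where
  "Rset m n = {P \<in> partitions n. \<forall>x\<in>#P. count P x < m}"

lemma partA:
  assumes m: "1 < m" and n: "1 \<le> n" and Q: "Q \<in> Rset m n"
  shows "Phi m Q \<in> Lset m n \<and> Psi m (Phi m Q) = Q"
proof -
  define s where "s = smallest_part Q"
  have Qp: "\<forall>x\<in>#Q. 0 < x" "sum_mset Q = n" "\<forall>x\<in>#Q. count Q x < m"
    using Q by (auto simp: Rset_def partitions_def)
  have ne: "Q \<noteq> {#}" using Qp n by auto
  have sQ: "s \<in># Q" and sle: "\<forall>y\<in>#Q. s \<le> y" using smallest_props[OF ne] by (auto simp: s_def)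
  have s0: "0 < s" using sQ Qp by auto
  have PhiQ: "Phi m Q = phi0 m s Q" by (simp add: Phi_def s_def)
  have cs: "count (Phi m Q) s = count Q s" using c2[OF m sle] PhiQ by simp
  have clt: "b < s \<Longrightarrow> count (Phi m Q) b = 0" for b using c1[OF m sle] PhiQ by simp
  have ge: "\<forall>y\<in>#Phi m Q. s \<le> y"
    using clt by (metis count_eq_zero_iff not_le_imp_less)
  have sP: "s \<in># Phi m Q" using cs sQ by (metis count_greater_zero_iff)
  have sm: "smallest_part (Phi m Q) = s" by (rule smallest_eq[OF sP ge])
  have inL: "Phi m Q \<in> Lset m n"
    unfolding Lset_def partitions_def
  proof (intro CollectI conjI ballI impI)
    show "0 < x" if "x \<in># Phi m Q" for x using ge that s0 by auto
    show "sum_mset (Phi m Q) = n" using c5[OF m] PhiQ Qp by simp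
    show "count (Phi m Q) (smallest_part (Phi m Q)) < m" using sm cs Qp sQ by simp
    show "x \<le> m * smallest_part (Phi m Q)" if "x \<in># Phi m Q" "m dvd x" for x
    proof (rule ccontr)
      assume "\<not> x \<le> m * smallest_part (Phi m Q)"
      then have xl: "m*s < x" using sm by simp
      have "s < x" using xl s0 m
        by (metis le_less_trans less_imp_le_nat mult_le_mono1 mult_1 Suc_leI One_nat_def)
      then have "count (Phi m Q) x = 0" using c3[OF m sle] c4[OF m that(2) xl] PhiQ by simp
      then show False using that(1) by (metis count_eq_zero_iff)
    qed
  qed
  have "count (Psi m (Phi m Q)) y = count Q y" for y
  proof -
    have cy: "count (Psi m (Phi m Q)) y = psif m s (Phi m Q) y" using count_Psi[OF m] sm by simp
    show ?thesis
    proof (cases "y \<le> s")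
      case True
      show ?thesis
      proof (cases "y = s")
        case True then show ?thesis using cy cs by (simp add: psif_def)
      next
        case False
        then have "y < s" using \<open>y \<le> s\<close> by simp
        have z1: "count Q y = 0" using sle \<open>y < s\<close> by (metis count_eq_zero_iff leD)
        have z2: "count (Phi m Q) y = 0" using clt \<open>y < s\<close> by blast
        show ?thesis using cy z1 z2 \<open>y < s\<close> by (simp add: psif_def)
      qed
    next
      case False
      define b where "b = bs m s y"
      define e where "e = ex m s y"
      have F: "s < b" "y = m^e*b" "m dvd b \<longrightarrow> b \<le> m*s"
        using F1[OF m, of s y] False by (auto simp: b_def e_def)
      have EC: "count (Ebs m s b Q) k = count Q (m^k*b)" for k by (rule Ecount[OF m F(1) F(3)])
      have Elt: "\<forall>k. count (Ebs m s b Q) k < m"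
      proof
        fix k show "count (Ebs m s b Q) k < m"
          using EC[of k] Qp(3) m by (cases "m^k*b \<in># Q") (auto simp: not_in_iff)
      qed
      have "count (Phi m Q) b = (\<Sum>k\<in>#Ebs m s b Q. m^k)" using c3[OF m sle F(1)] PhiQ by simp
      then have "count (Phi m Q) b div m^e mod m = count (Ebs m s b Q) e"
        using digit_count[OF Elt, of e] by simp
      moreover have "psif m s (Phi m Q) y = count (Phi m Q) b div m^e mod m"
        using False by (simp add: psif_def b_def[symmetric] e_def[symmetric])
      ultimately show ?thesis using cy EC[of e] F(2)[symmetric] by simp
    qed
  qed
  then show ?thesis using inL by (simp add: multiset_eq_iff)
qed


lemma partB:
  assumes m: "1 < m" and n: "1 \<le> n" and P: "P \<in> Lset m n"
  shows "Psi m P \<in> Rset m n \<and> Phi m (Psi m P) = P"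
proof -
  define s where "s = smallest_part P"
  have Pp: "\<forall>x\<in>#P. 0 < x" "sum_mset P = n" "count P s < m" "\<forall>x\<in>#P. m dvd x \<longrightarrow> x \<le> m*s"
    using P by (auto simp: Lset_def partitions_def s_def)
  have ne: "P \<noteq> {#}" using Pp n by auto
  have sP: "s \<in># P" and sle: "\<forall>y\<in>#P. s \<le> y" using smallest_props[OF ne] by (auto simp: s_def)
  have s0: "0 < s" using sP Pp by auto
  define Q where "Q = Psi m P"
  have cQ: "count Q y = psif m s P y" for y using count_Psi[OF m] by (simp add: Q_def s_def)
  have Plt: "y < s \<Longrightarrow> count P y = 0" for y using sle by (metis count_eq_zero_iff leD)
  have Qlt: "y < s \<Longrightarrow> count Q y = 0" for y using cQ Plt by (simp add: psif_def)
  have cQs: "count Q s = count P s" using cQ by (simp add: psif_def)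
  have geQ: "\<forall>y\<in>#Q. s \<le> y" using Qlt by (metis count_eq_zero_iff not_le_imp_less)
  have sQ: "s \<in># Q" using cQs sP by (metis count_greater_zero_iff)
  have smQ: "smallest_part Q = s" by (rule smallest_eq[OF sQ geQ])
  have PhiQ: "Phi m Q = phi0 m s Q" by (simp add: Phi_def smQ)
  have eq: "Phi m Q = P"
    unfolding multiset_eq_iff
  proof
    fix b
    show "count (Phi m Q) b = count P b"
    proof (cases "b \<le> s")
      case True
      then show ?thesis
        using c1[OF m geQ, of b] c2[OF m geQ] Plt PhiQ cQs by (cases "b = s") auto
    next
      case False
      then have sb: "s < b" by simp
      show ?thesis
      proof (cases "m dvd b \<and> m*s < b")
        case True
        have "count P b = 0" using Pp(4) True by (metis count_eq_zero_iff leD)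
        then show ?thesis using c3[OF m geQ sb] c4[OF m, of b s Q] True PhiQ by simp
      next
        case False
        then have B: "m dvd b \<longrightarrow> b \<le> m*s" by auto
        have EC: "count (Ebs m s b Q) k = count P b div m^k mod m" for k
        proof -
          have gt: "s < m^k*b"
          proof -
            have "1 \<le> m^k" using m by simp
            then have "1*b \<le> m^k*b" by (rule mult_le_mono1)
            then show ?thesis using sb by linarith
          qed
          show ?thesis using Ecount[OF m sb B, of Q k] cQ[of "m^k*b"] gt F2[OF m sb B] F2b[OF m sb B]
            by (simp add: psif_def)
        qed
        obtain E0 where E0: "\<forall>k. count E0 k < m" "(\<Sum>j\<in>#E0. m^j) = count P b"
          using digits_exist[of m "count P b"] m by auto
        have "Ebs m s b Q = E0" unfolding multiset_eq_iff
          using EC digit_count[OF E0(1)] E0(2) by simp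
        then show ?thesis using c3[OF m geQ sb] PhiQ E0(2) by simp
      qed
    qed
  qed
  have inR: "Q \<in> Rset m n"
    unfolding Rset_def partitions_def
  proof (intro CollectI conjI ballI)
    show "0 < x" if "x \<in># Q" for x using geQ that s0 by auto
    show "sum_mset Q = n" using c5[OF m, of s Q] PhiQ eq Pp(2) by simp
    show "count Q x < m" if "x \<in># Q" for x
      using cQ[of x] Pp(3) m by (cases "x \<le> s") (auto simp: psif_def Plt dest: le_neq_implies_less)
  qed
  show ?thesis using inR eq by (simp add: Q_def)
qed

theorem theorem6:
  fixes m n :: nat
  assumes "m \<ge> 2" and "n \<ge> 1"
  shows "card {P \<in> partitions n.
                 count P (smallest_part P) < m \<and>
                 (\<forall>x\<in>#P. m dvd x \<longrightarrow> x \<le> m * smallest_part P)}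
       = card {P \<in> partitions n. \<forall>x\<in>#P. count P x < m}"
proof -
  have m: "1 < m" using assms by simp
  have "bij_betw (Phi m) (Rset m n) (Lset m n)"
    by (rule bij_betw_byWitness[where f' = "Psi m"])
       (use partA[OF m assms(2)] partB[OF m assms(2)] in auto)
  then have "card (Rset m n) = card (Lset m n)" by (rule bij_betw_same_card)
  then show ?thesis by (simp add: Lset_def Rset_def)
qed

end
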